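(* Let $F$ be a cumulative distribution function on $[0,\infty)$ that has a density $f$ and a finite mean, and suppose $\mathsf{OPT\text{-}GFT}(F)>0$. Let $B,S$ be independent with common distribution $F$, and let $p\sim F$ be drawn independently of $(B,S)$. Then \[\mathbb{E}_{p\sim F}\big[\mathsf{GFT}(p,F)\big]=\tfrac12\,\mathsf{OPT\text{-}GFT}(F)\] exactly, for every such $F$.
   Context: Symmetric bilateral trade: the buyer's value $B$ and the seller's value $S$ are independent draws from the same distribution $F$. A fixed-price mechanism posts a price $p$; trade occurs iff $B\ge p> S$ (for continuous $F$ the tie-breaking convention is immaterial). Gains from trade of price $p$: $\mathsf{GFT}(p,F)=\mathbb{E}[(B-S)\mathbf 1_{B\ge p>S}]$. Optimal gains from trade: $\mathsf{OPT\text{-}GFT}(F)=\mathbb{E}[(B-S)\mathbf 1_{B>S}]$. *)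

theory Defs
  imports "HOL-Probability.Probability"
begin

definition GFT :: "real \<Rightarrow> real measure \<Rightarrow> real" where
  "GFT p D = (\<integral>z. (fst z - snd z) * (if p \<le> fst z \<and> snd z < p then 1 else 0) \<partial>(D \<Otimes>\<^sub>M D))"

definition OPT_GFT :: "real measure \<Rightarrow> real" where
  "OPT_GFT D = (\<integral>z. (fst z - snd z) * (if snd z < fst z then 1 else 0) \<partial>(D \<Otimes>\<^sub>M D))"

end

theory Submission imports Defs begin
context
  fixes D :: "real measure"
  assumes sD: "sets D = sets borel" and P: "prob_space D"
begin

lemma PS: "pair_sigma_finite D D"
  using P by (simp add: pair_sigma_finite_def prob_space_imp_sigma_finite)

lemma SF: "sigma_finite_measure D"
  using P by (simp add: prob_space_imp_sigma_finite)

lemma spD: "space D = UNIV"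
  using sets_eq_imp_space_eq[OF sD] by simp

definition M3 :: "(real \<Rightarrow> real \<Rightarrow> real \<Rightarrow> ennreal) \<Rightarrow> bool" where
  "M3 g \<longleftrightarrow> (\<lambda>w. g (fst (fst w)) (snd (fst w)) (snd w)) \<in> borel_measurable ((D \<Otimes>\<^sub>M D) \<Otimes>\<^sub>M D)"

lemma M3_inner: "M3 g \<Longrightarrow> (\<lambda>z. g x y z) \<in> borel_measurable D"
proof -
  assume "M3 g"
  hence m: "(\<lambda>w. g (fst (fst w)) (snd (fst w)) (snd w)) \<in> borel_measurable ((D \<Otimes>\<^sub>M D) \<Otimes>\<^sub>M D)" unfolding M3_def .
  have "(x,y) \<in> space (D \<Otimes>\<^sub>M D)" by (simp add: space_pair_measure spD)
  from measurable_compose_Pair1[OF this m] show ?thesis by simp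
qed

lemma M3_mid: "M3 g \<Longrightarrow> (\<lambda>w. \<integral>\<^sup>+z. g (fst w) (snd w) z \<partial>D) \<in> borel_measurable (D \<Otimes>\<^sub>M D)"
  unfolding M3_def by (drule sigma_finite_measure.borel_measurable_nn_integral_fst[OF SF]) simp

lemma M3_mid2: "M3 g \<Longrightarrow> (\<lambda>y. \<integral>\<^sup>+z. g x y z \<partial>D) \<in> borel_measurable D"
  using measurable_compose_Pair1[OF _ M3_mid, of x] by (simp add: spD)

lemma M3_outer: "M3 g \<Longrightarrow> (\<lambda>x. \<integral>\<^sup>+y. \<integral>\<^sup>+z. g x y z \<partial>D \<partial>D) \<in> borel_measurable D"
  by (drule M3_mid, drule sigma_finite_measure.borel_measurable_nn_integral_fst[OF SF]) simp

lemma M3_pair: "M3 g \<Longrightarrow> (\<lambda>w. g x (fst w) (snd w)) \<in> borel_measurable (D \<Otimes>\<^sub>M D)"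
proof -
  assume "M3 g"
  then have m: "(\<lambda>w. g (fst (fst w)) (snd (fst w)) (snd w)) \<in> borel_measurable ((D \<Otimes>\<^sub>M D) \<Otimes>\<^sub>M D)"
    unfolding M3_def .
  have "(\<lambda>w::real\<times>real. ((x, fst w), snd w)) \<in> measurable (D \<Otimes>\<^sub>M D) ((D \<Otimes>\<^sub>M D) \<Otimes>\<^sub>M D)"
    by (intro measurable_Pair) (simp_all add: spD)
  from measurable_comp[OF this m] show ?thesis by (simp add: o_def)
qed

lemma swap23:
  assumes "M3 g"
  shows "(\<integral>\<^sup>+x. \<integral>\<^sup>+y. \<integral>\<^sup>+z. g x y z \<partial>D \<partial>D \<partial>D) = (\<integral>\<^sup>+x. \<integral>\<^sup>+y. \<integral>\<^sup>+z. g x z y \<partial>D \<partial>D \<partial>D)"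
proof (rule nn_integral_cong)
  fix x
  show "(\<integral>\<^sup>+y. \<integral>\<^sup>+z. g x y z \<partial>D \<partial>D) = (\<integral>\<^sup>+y. \<integral>\<^sup>+z. g x z y \<partial>D \<partial>D)"
    using pair_sigma_finite.Fubini[OF PS M3_pair[OF assms, of x]] by simp
qed

lemma swap12:
  assumes "M3 g"
  shows "(\<integral>\<^sup>+x. \<integral>\<^sup>+y. \<integral>\<^sup>+z. g x y z \<partial>D \<partial>D \<partial>D) = (\<integral>\<^sup>+x. \<integral>\<^sup>+y. \<integral>\<^sup>+z. g y x z \<partial>D \<partial>D \<partial>D)"
  using pair_sigma_finite.Fubini[OF PS M3_mid[OF assms]] by simp

lemma add3:
  assumes "M3 g" "M3 h"
  shows "(\<integral>\<^sup>+x. \<integral>\<^sup>+y. \<integral>\<^sup>+z. g x y z + h x y z \<partial>D \<partial>D \<partial>D) =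
    (\<integral>\<^sup>+x. \<integral>\<^sup>+y. \<integral>\<^sup>+z. g x y z \<partial>D \<partial>D \<partial>D) + (\<integral>\<^sup>+x. \<integral>\<^sup>+y. \<integral>\<^sup>+z. h x y z \<partial>D \<partial>D \<partial>D)"
proof -
  have "(\<integral>\<^sup>+x. \<integral>\<^sup>+y. \<integral>\<^sup>+z. g x y z + h x y z \<partial>D \<partial>D \<partial>D) =
     (\<integral>\<^sup>+x. (\<integral>\<^sup>+y. \<integral>\<^sup>+z. g x y z \<partial>D \<partial>D) + (\<integral>\<^sup>+y. \<integral>\<^sup>+z. h x y z \<partial>D \<partial>D) \<partial>D)"
  proof (rule nn_integral_cong)
    fix x
    have "(\<integral>\<^sup>+y. \<integral>\<^sup>+z. g x y z + h x y z \<partial>D \<partial>D) = (\<integral>\<^sup>+y. (\<integral>\<^sup>+z. g x y z \<partial>D) + (\<integral>\<^sup>+z. h x y z \<partial>D) \<partial>D)"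
      by (rule nn_integral_cong, rule nn_integral_add) (use assms M3_inner in auto)
    also have "\<dots> = (\<integral>\<^sup>+y. \<integral>\<^sup>+z. g x y z \<partial>D \<partial>D) + (\<integral>\<^sup>+y. \<integral>\<^sup>+z. h x y z \<partial>D \<partial>D)"
      by (rule nn_integral_add) (use assms M3_mid2 in auto)
    finally show "(\<integral>\<^sup>+y. \<integral>\<^sup>+z. g x y z + h x y z \<partial>D \<partial>D) = (\<integral>\<^sup>+y. \<integral>\<^sup>+z. g x y z \<partial>D \<partial>D) + (\<integral>\<^sup>+y. \<integral>\<^sup>+z. h x y z \<partial>D \<partial>D)" .
  qed
  also have "\<dots> = (\<integral>\<^sup>+x. \<integral>\<^sup>+y. \<integral>\<^sup>+z. g x y z \<partial>D \<partial>D \<partial>D) + (\<integral>\<^sup>+x. \<integral>\<^sup>+y. \<integral>\<^sup>+z. h x y z \<partial>D \<partial>D \<partial>D)"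
    by (rule nn_integral_add) (use assms M3_outer in auto)
  finally show ?thesis .
qed

lemma ae_inner:
  assumes "\<And>x y. AE z in D. g x y z = h x y z"
  shows "(\<integral>\<^sup>+x. \<integral>\<^sup>+y. \<integral>\<^sup>+z. g x y z \<partial>D \<partial>D \<partial>D) = (\<integral>\<^sup>+x. \<integral>\<^sup>+y. \<integral>\<^sup>+z. h x y z \<partial>D \<partial>D \<partial>D)"
  by (intro nn_integral_cong nn_integral_cong_AE assms)

lemma M3I:
  assumes "(\<lambda>w. g (fst (fst w)) (snd (fst w)) (snd w)) \<in> borel_measurable ((borel \<Otimes>\<^sub>M borel) \<Otimes>\<^sub>M borel)"
  shows "M3 g"
  unfolding M3_def using assms
  by (simp add: measurable_cong_sets[OF sets_pair_measure_cong[OF sets_pair_measure_cong[OF sD sD] sD] refl])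

lemma nn3_const: "(\<integral>\<^sup>+x. \<integral>\<^sup>+y. \<integral>\<^sup>+z. k x y \<partial>D \<partial>D \<partial>D) = (\<integral>\<^sup>+x. \<integral>\<^sup>+y. k x y \<partial>D \<partial>D)"
  using prob_space.emeasure_space_1[OF P] by (simp add: nn_integral_const)

lemma key:
  assumes atom: "\<And>a. AE z in D. z \<noteq> a"
  shows "2 * (\<integral>\<^sup>+x. \<integral>\<^sup>+y. \<integral>\<^sup>+z. ennreal ((x - y) * (if z \<le> x \<and> y < z then 1 else 0)) \<partial>D \<partial>D \<partial>D)
       = (\<integral>\<^sup>+x. \<integral>\<^sup>+y. ennreal ((x - y) * (if y < x then 1 else 0)) \<partial>D \<partial>D)"
proof -
  let ?I = "\<lambda>g. (\<integral>\<^sup>+x. \<integral>\<^sup>+y. \<integral>\<^sup>+z. g x y z \<partial>D \<partial>D \<partial>D)"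
  let ?K = "\<lambda>x y z. ennreal ((x - y) * (if y < x then 1 else 0))"
  let ?A = "\<lambda>x y z. ennreal ((x - y) * (if y < x \<and> z \<le> y then 1 else 0))"
  let ?L = "\<lambda>x y z. ennreal ((x - y) * (if z \<le> x \<and> y < z then 1 else 0))"
  let ?C = "\<lambda>x y z. ennreal ((x - y) * (if y < x \<and> x < z then 1 else 0))"
  let ?L1 = "\<lambda>x y z. ennreal ((x - z) * (if z \<le> x \<and> y < z then 1 else 0))"
  let ?L2 = "\<lambda>x y z. ennreal ((z - y) * (if z \<le> x \<and> y < z then 1 else 0))"
  have mA: "M3 ?A" by (rule M3I) measurable
  have mL: "M3 ?L" by (rule M3I) measurable
  have mC: "M3 ?C" by (rule M3I) measurable
  have mL1: "M3 ?L1" by (rule M3I) measurable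
  have mL2: "M3 ?L2" by (rule M3I) measurable
  have "?I ?K = ?I (\<lambda>x y z. ?A x y z + ?L x y z + ?C x y z)"
  proof (intro nn_integral_cong)
    fix x y z :: real
    show "?K x y z = ?A x y z + ?L x y z + ?C x y z"
      by (cases "z \<le> y"; cases "z \<le> x"; cases "y < x") (auto simp: ennreal_plus[symmetric] simp del: ennreal_plus)
  qed
  also have eqK: "\<dots> = ?I ?A + ?I ?L + ?I ?C"
  proof -
    have m1: "M3 (\<lambda>x y z. ?A x y z + ?L x y z)" by (rule M3I) measurable
    show ?thesis using add3[OF m1 mC] add3[OF mA mL] by simp
  qed
  finally have eqK: "?I ?K = ?I ?A + ?I ?L + ?I ?C" .
  have eqL: "?I ?L = ?I ?L1 + ?I ?L2"
  proof -
    have "?I ?L = ?I (\<lambda>x y z. ?L1 x y z + ?L2 x y z)"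
    proof (intro nn_integral_cong)
      fix x y z :: real
      show "?L x y z = ?L1 x y z + ?L2 x y z"
        by (cases "z \<le> x \<and> y < z") (auto simp: ennreal_plus[symmetric] algebra_simps simp del: ennreal_plus)
    qed
    also have "\<dots> = ?I ?L1 + ?I ?L2" by (rule add3[OF mL1 mL2])
    finally show ?thesis .
  qed
  have eqA: "?I ?A = ?I ?L1"
  proof -
    have "?I ?L1 = ?I (\<lambda>x y z. ?L1 x z y)" by (rule swap23[OF mL1])
    also have "\<dots> = ?I ?A"
    proof (rule ae_inner)
      fix x y
      show "AE z in D. ?L1 x z y = ?A x y z"
        using atom[of y] by eventually_elim auto
    qed
    finally show ?thesis ..
  qed
  have eqC: "?I ?C = ?I ?L2"
  proof -
    have "?I ?L2 = ?I (\<lambda>x y z. ?L2 y x z)" by (rule swap12[OF mL2])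
    also have "\<dots> = ?I (\<lambda>x y z. ?L2 z x y)"
      by (rule swap23) (rule M3I, measurable)
    also have "\<dots> = ?I (\<lambda>x y z. ?L2 z y x)"
      by (rule swap12) (rule M3I, measurable)
    also have "\<dots> = ?I ?C"
    proof (rule ae_inner)
      fix x y
      show "AE z in D. ?L2 z y x = ?C x y z"
        using atom[of x] by eventually_elim auto
    qed
    finally show ?thesis ..
  qed
  have "?I ?K = 2 * ?I ?L"
    unfolding eqK eqA eqC by (simp add: eqL mult_2 add_ac)
  then show ?thesis using nn3_const[of "\<lambda>x y. ennreal ((x - y) * (if y < x then 1 else 0))"] by simp
qed

end

theorem theorem1:
  fixes f :: "real \<Rightarrow> real"
  assumes f_meas: "f \<in> borel_measurable borel"
    and f_nonneg: "\<And>x. 0 \<le> f x"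
    and f_support: "\<And>x. x < 0 \<Longrightarrow> f x = 0"
    and f_prob: "(\<integral>\<^sup>+ x. ennreal (f x) \<partial>lborel) = 1"
    and finite_mean: "integrable (density lborel (\<lambda>x. ennreal (f x))) (\<lambda>x. x)"
    and opt_pos: "OPT_GFT (density lborel (\<lambda>x. ennreal (f x))) > 0"
  shows "(\<integral>p. GFT p (density lborel (\<lambda>x. ennreal (f x))) \<partial>(density lborel (\<lambda>x. ennreal (f x))))
         = OPT_GFT (density lborel (\<lambda>x. ennreal (f x))) / 2"
proof -
  define D where "D = density lborel (\<lambda>x. ennreal (f x))"
  note [measurable] = f_meas
  have sD: "sets D = sets borel" unfolding D_def by simp
  have spD: "space D = UNIV" unfolding D_def by simp
  have P: "prob_space D"
    by (rule prob_spaceI) (simp add: D_def emeasure_density f_prob)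
  have atom: "\<And>a. AE z in D. z \<noteq> a"
    unfolding D_def by (subst AE_density) (auto intro: eventually_mono[OF AE_lborel_singleton])
  have SF: "sigma_finite_measure D" using P by (simp add: prob_space_imp_sigma_finite)
  have sDD: "sets (D \<Otimes>\<^sub>M D) = sets (borel \<Otimes>\<^sub>M borel)"
    by (rule sets_pair_measure_cong[OF sD sD])
  define Np where "Np p = (\<integral>\<^sup>+b. \<integral>\<^sup>+s. ennreal ((b - s) * (if p \<le> b \<and> s < p then 1 else 0)) \<partial>D \<partial>D)" for p
  define Opt where "Opt = (\<integral>\<^sup>+b. \<integral>\<^sup>+s. ennreal ((b - s) * (if s < b then 1 else 0)) \<partial>D \<partial>D)"
  have G: "GFT p D = enn2real (Np p)" for p
  proof -
    have m: "(\<lambda>z. (fst z - snd z) * (if p \<le> fst z \<and> snd z < p then 1 else 0)) \<in> borel_measurable (D \<Otimes>\<^sub>M D)"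
      by (simp add: measurable_cong_sets[OF sDD refl])
    have "GFT p D = enn2real (\<integral>\<^sup>+z. ennreal ((fst z - snd z) * (if p \<le> fst z \<and> snd z < p then 1 else 0)) \<partial>(D \<Otimes>\<^sub>M D))"
      unfolding GFT_def by (rule integral_eq_nn_integral[OF m]) auto
    also have "\<dots> = enn2real (Np p)"
      unfolding Np_def by (subst sigma_finite_measure.nn_integral_fst[OF SF, symmetric])
        (simp_all add: measurable_cong_sets[OF sDD refl])
    finally show ?thesis .
  qed
  have mO: "(\<lambda>z. (fst z - snd z) * (if snd z < fst z then 1 else 0)) \<in> borel_measurable (D \<Otimes>\<^sub>M D)"
    by (simp add: measurable_cong_sets[OF sDD refl])
  have O1: "(\<integral>\<^sup>+z. ennreal ((fst z - snd z) * (if snd z < fst z then 1 else 0)) \<partial>(D \<Otimes>\<^sub>M D)) = Opt"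
    unfolding Opt_def by (subst sigma_finite_measure.nn_integral_fst[OF SF, symmetric])
        (simp_all add: measurable_cong_sets[OF sDD refl])
  have O: "OPT_GFT D = enn2real Opt"
    unfolding OPT_GFT_def O1[symmetric] by (rule integral_eq_nn_integral[OF mO]) auto
  have Ofin: "Opt < \<infinity>"
  proof -
    have "integrable (D \<Otimes>\<^sub>M D) (\<lambda>z. (fst z - snd z) * (if snd z < fst z then 1 else 0))"
      using opt_pos not_integrable_integral_eq unfolding OPT_GFT_def D_def by fastforce
    from integrableD(2)[OF this] show ?thesis using O1 by (simp add: less_top)
  qed
  have NpO: "Np p \<le> Opt" for p
    unfolding Np_def Opt_def by (intro nn_integral_mono ennreal_leI) auto
  have mH: "M3 D (\<lambda>p b s. ennreal ((b - s) * (if p \<le> b \<and> s < p then 1 else 0)))"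
    by (rule M3I[OF sD P]) measurable
  have mNp: "Np \<in> borel_measurable D"
    using M3_outer[OF sD P mH] unfolding Np_def .
  have "(\<integral>p. GFT p D \<partial>D) = (\<integral>p. enn2real (Np p) \<partial>D)" by (simp add: G)
  also have "\<dots> = enn2real (\<integral>\<^sup>+p. ennreal (enn2real (Np p)) \<partial>D)"
    by (rule integral_eq_nn_integral) (use mNp in auto)
  also have "(\<integral>\<^sup>+p. ennreal (enn2real (Np p)) \<partial>D) = (\<integral>\<^sup>+p. Np p \<partial>D)"
  proof (intro nn_integral_cong ennreal_enn2real)
    fix p show "Np p < top" using le_less_trans[OF NpO Ofin] by simp
  qed
  finally have L: "(\<integral>p. GFT p D \<partial>D) = enn2real (\<integral>\<^sup>+p. Np p \<partial>D)" .
  have "(\<integral>\<^sup>+p. Np p \<partial>D) = (\<integral>\<^sup>+x. \<integral>\<^sup>+y. \<integral>\<^sup>+z. ennreal ((x - y) * (if z \<le> x \<and> y < z then 1 else 0)) \<partial>D \<partial>D \<partial>D)"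
  proof -
    have "(\<integral>\<^sup>+p. Np p \<partial>D) = (\<integral>\<^sup>+x. \<integral>\<^sup>+y. \<integral>\<^sup>+z. ennreal ((x - z) * (if y \<le> x \<and> z < y then 1 else 0)) \<partial>D \<partial>D \<partial>D)"
      unfolding Np_def by (rule swap12[OF sD P mH])
    also have "\<dots> = (\<integral>\<^sup>+x. \<integral>\<^sup>+y. \<integral>\<^sup>+z. ennreal ((x - y) * (if z \<le> x \<and> y < z then 1 else 0)) \<partial>D \<partial>D \<partial>D)"
      by (rule swap23[OF sD P]) (rule M3I[OF sD P], measurable)
    finally show ?thesis .
  qed
  with key[OF sD P atom] have "2 * (\<integral>\<^sup>+p. Np p \<partial>D) = Opt" unfolding Opt_def by simp
  then have "enn2real Opt = 2 * enn2real (\<integral>\<^sup>+p. Np p \<partial>D)"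
    by (metis enn2real_mult enn2real_numeral)
  then show ?thesis using L O unfolding D_def by simp
qed

end
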